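(* Let $R$ be a ring and $M$ a left $R$-module which satisfies the complete radical formula. Then the following statements are equivalent: (1) $M$ is completely semiprime; (2) $\langle E_M(0)\rangle = 0$; (3) $\beta_{co}(M)=0$; (4) $M$ is a subdirect product of completely prime modules.
   Context: Rings are associative with identity; modules are unital left modules. A submodule $P$ of $M$ is completely prime if $RM\not\subseteq P$ and for all $r\in R$, $m\in M$, $rm\in P$ implies $m\in P$ or $rM\subseteq P$. A proper submodule $P$ is completely semiprime if $RM\not\subseteq P$ and for all $a\in R$, $m\in M$, $a^2m\in P$ implies $am\in P$. A module is completely prime (resp. completely semiprime) if its zero submodule is completely prime (resp. completely semiprime). For a submodule $N$ of $M$, $\beta^s_{co}(N)$ is the intersection of all completely prime submodules of $M$ containing $N$ (equal to $M$ if there are none), and $\beta_{co}(M)=\beta^s_{co}(0)$. The envelope of $N$ is $E_M(N)=\{rm : r\in R, m\in M, r^km\in N \text{ for some } k\in\mathbb N\}$, and $\langle E_M(N)\rangle$ is the submodule of $M$ generated by it. A submodule $N$ satisfies the complete radical formula if $\langle E_M(N)\rangle=\beta^s_{co}(N)$; a module satisfies the complete radical formula if all its submodules do. $M$ is a subdirect product of modules $S_\lambda$ ($\lambda\in\Lambda$) if there is an injective homomorphism $\sigma:M\to\prod_\lambda S_\lambda$ such that $\pi_\lambda\circ\sigma$ is surjective for every canonical projection $\pi_\lambda$. *)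

theory Defs
  imports "HOL-Algebra.Module" "HOL-Library.FuncSet"
begin

text \<open>Left unital modules over a (not necessarily commutative) ring with identity.
  We reuse the HOL-Algebra record type of modules, but not the locale module
  (which requires a commutative ring).\<close>

definition left_module :: "('r, 'x) ring_scheme \<Rightarrow> ('r, 'm, 'y) module_scheme \<Rightarrow> bool" where
  "left_module R M \<longleftrightarrow> ring R \<and> abelian_group M \<and>
     (\<forall>a \<in> carrier R. \<forall>x \<in> carrier M. a \<odot>\<^bsub>M\<^esub> x \<in> carrier M) \<and>
     (\<forall>a \<in> carrier R. \<forall>b \<in> carrier R. \<forall>x \<in> carrier M.
        (a \<oplus>\<^bsub>R\<^esub> b) \<odot>\<^bsub>M\<^esub> x = a \<odot>\<^bsub>M\<^esub> x \<oplus>\<^bsub>M\<^esub> b \<odot>\<^bsub>M\<^esub> x) \<and>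
     (\<forall>a \<in> carrier R. \<forall>x \<in> carrier M. \<forall>y \<in> carrier M.
        a \<odot>\<^bsub>M\<^esub> (x \<oplus>\<^bsub>M\<^esub> y) = a \<odot>\<^bsub>M\<^esub> x \<oplus>\<^bsub>M\<^esub> a \<odot>\<^bsub>M\<^esub> y) \<and>
     (\<forall>a \<in> carrier R. \<forall>b \<in> carrier R. \<forall>x \<in> carrier M.
        (a \<otimes>\<^bsub>R\<^esub> b) \<odot>\<^bsub>M\<^esub> x = a \<odot>\<^bsub>M\<^esub> (b \<odot>\<^bsub>M\<^esub> x)) \<and>
     (\<forall>x \<in> carrier M. \<one>\<^bsub>R\<^esub> \<odot>\<^bsub>M\<^esub> x = x)"

definition submod :: "('r, 'x) ring_scheme \<Rightarrow> ('r, 'm, 'y) module_scheme \<Rightarrow> 'm set \<Rightarrow> bool" where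
  "submod R M N \<longleftrightarrow> N \<subseteq> carrier M \<and> \<zero>\<^bsub>M\<^esub> \<in> N \<and>
     (\<forall>x \<in> N. \<forall>y \<in> N. x \<oplus>\<^bsub>M\<^esub> y \<in> N) \<and>
     (\<forall>x \<in> N. \<ominus>\<^bsub>M\<^esub> x \<in> N) \<and>
     (\<forall>a \<in> carrier R. \<forall>x \<in> N. a \<odot>\<^bsub>M\<^esub> x \<in> N)"

definition RM :: "('r, 'x) ring_scheme \<Rightarrow> ('r, 'm, 'y) module_scheme \<Rightarrow> 'm set" where
  "RM R M = {a \<odot>\<^bsub>M\<^esub> m | a m. a \<in> carrier R \<and> m \<in> carrier M}"

definition gen_submod :: "('r, 'x) ring_scheme \<Rightarrow> ('r, 'm, 'y) module_scheme \<Rightarrow> 'm set \<Rightarrow> 'm set" where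
  "gen_submod R M S = \<Inter>{N. submod R M N \<and> S \<subseteq> N}"

definition completely_prime_submod :: "('r, 'x) ring_scheme \<Rightarrow> ('r, 'm, 'y) module_scheme \<Rightarrow> 'm set \<Rightarrow> bool" where
  "completely_prime_submod R M P \<longleftrightarrow> submod R M P \<and> \<not> RM R M \<subseteq> P \<and>
     (\<forall>r \<in> carrier R. \<forall>m \<in> carrier M. r \<odot>\<^bsub>M\<^esub> m \<in> P \<longrightarrow>
        m \<in> P \<or> (\<forall>m' \<in> carrier M. r \<odot>\<^bsub>M\<^esub> m' \<in> P))"

definition completely_semiprime_submod :: "('r, 'x) ring_scheme \<Rightarrow> ('r, 'm, 'y) module_scheme \<Rightarrow> 'm set \<Rightarrow> bool" where
  "completely_semiprime_submod R M P \<longleftrightarrow> submod R M P \<and> P \<noteq> carrier M \<and> \<not> RM R M \<subseteq> P \<and>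
     (\<forall>a \<in> carrier R. \<forall>m \<in> carrier M. (a \<otimes>\<^bsub>R\<^esub> a) \<odot>\<^bsub>M\<^esub> m \<in> P \<longrightarrow> a \<odot>\<^bsub>M\<^esub> m \<in> P)"

definition completely_prime_module :: "('r, 'x) ring_scheme \<Rightarrow> ('r, 'm, 'y) module_scheme \<Rightarrow> bool" where
  "completely_prime_module R M \<longleftrightarrow> completely_prime_submod R M {\<zero>\<^bsub>M\<^esub>}"

definition completely_semiprime_module :: "('r, 'x) ring_scheme \<Rightarrow> ('r, 'm, 'y) module_scheme \<Rightarrow> bool" where
  "completely_semiprime_module R M \<longleftrightarrow> completely_semiprime_submod R M {\<zero>\<^bsub>M\<^esub>}"

definition beta_s_co :: "('r, 'x) ring_scheme \<Rightarrow> ('r, 'm, 'y) module_scheme \<Rightarrow> 'm set \<Rightarrow> 'm set" where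
  "beta_s_co R M N =
     (if \<exists>P. completely_prime_submod R M P \<and> N \<subseteq> P
      then \<Inter>{P. completely_prime_submod R M P \<and> N \<subseteq> P}
      else carrier M)"

definition beta_co :: "('r, 'x) ring_scheme \<Rightarrow> ('r, 'm, 'y) module_scheme \<Rightarrow> 'm set" where
  "beta_co R M = beta_s_co R M {\<zero>\<^bsub>M\<^esub>}"

definition envelope :: "('r, 'x) ring_scheme \<Rightarrow> ('r, 'm, 'y) module_scheme \<Rightarrow> 'm set \<Rightarrow> 'm set" where
  "envelope R M N = {r \<odot>\<^bsub>M\<^esub> m | r m. r \<in> carrier R \<and> m \<in> carrier M \<and>
      (\<exists>k::nat. k \<ge> 1 \<and> (r [^]\<^bsub>R\<^esub> k) \<odot>\<^bsub>M\<^esub> m \<in> N)}"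

definition complete_radical_formula_submod :: "('r, 'x) ring_scheme \<Rightarrow> ('r, 'm, 'y) module_scheme \<Rightarrow> 'm set \<Rightarrow> bool" where
  "complete_radical_formula_submod R M N \<longleftrightarrow> gen_submod R M (envelope R M N) = beta_s_co R M N"

definition complete_radical_formula :: "('r, 'x) ring_scheme \<Rightarrow> ('r, 'm, 'y) module_scheme \<Rightarrow> bool" where
  "complete_radical_formula R M \<longleftrightarrow>
     (\<forall>N. submod R M N \<longrightarrow> complete_radical_formula_submod R M N)"

definition module_hom :: "('r, 'x) ring_scheme \<Rightarrow> ('r, 'm, 'y) module_scheme \<Rightarrow> ('r, 'n, 'z) module_scheme \<Rightarrow> ('m \<Rightarrow> 'n) set" where
  "module_hom R M N = {h. h \<in> carrier M \<rightarrow> carrier N \<and>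
     (\<forall>x \<in> carrier M. \<forall>y \<in> carrier M. h (x \<oplus>\<^bsub>M\<^esub> y) = h x \<oplus>\<^bsub>N\<^esub> h y) \<and>
     (\<forall>a \<in> carrier R. \<forall>x \<in> carrier M. h (a \<odot>\<^bsub>M\<^esub> x) = a \<odot>\<^bsub>N\<^esub> h x)}"

definition prod_module :: "'i set \<Rightarrow> ('i \<Rightarrow> ('r, 's) module) \<Rightarrow> ('r, 'i \<Rightarrow> 's) module" where
  "prod_module I S =
     \<lparr> carrier = PiE I (\<lambda>i. carrier (S i)),
       monoid.mult = (\<lambda>f g. \<lambda>i\<in>I. f i \<otimes>\<^bsub>S i\<^esub> g i),
       one = (\<lambda>i\<in>I. \<one>\<^bsub>S i\<^esub>),
       zero = (\<lambda>i\<in>I. \<zero>\<^bsub>S i\<^esub>),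
       add = (\<lambda>f g. \<lambda>i\<in>I. f i \<oplus>\<^bsub>S i\<^esub> g i),
       smult = (\<lambda>a f. \<lambda>i\<in>I. a \<odot>\<^bsub>S i\<^esub> f i) \<rparr>"

definition subdirect_product_of_completely_prime ::
  "('r, 'x) ring_scheme \<Rightarrow> ('r, 'm, 'y) module_scheme \<Rightarrow> 'i set \<Rightarrow> ('i \<Rightarrow> ('r, 's) module) \<Rightarrow> bool" where
  "subdirect_product_of_completely_prime R M I S \<longleftrightarrow>
     (\<forall>i \<in> I. left_module R (S i) \<and> completely_prime_module R (S i)) \<and>
     (\<exists>\<sigma>. \<sigma> \<in> module_hom R M (prod_module I S) \<and> inj_on \<sigma> (carrier M) \<and>
        (\<forall>i \<in> I. (\<lambda>m. \<sigma> m i) ` carrier M = carrier (S i)))"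

end

theory Submission
  imports Defs "HOL-Algebra.AbelCoset"
begin

lemma lm_ring: "left_module R M \<Longrightarrow> ring R" by (simp add: left_module_def)
lemma lm_ag: "left_module R M \<Longrightarrow> abelian_group M" by (simp add: left_module_def)
lemma lm_cl: "left_module R M \<Longrightarrow> a \<in> carrier R \<Longrightarrow> x \<in> carrier M \<Longrightarrow> a \<odot>\<^bsub>M\<^esub> x \<in> carrier M"
  by (simp add: left_module_def)
lemma lm_d1: "left_module R M \<Longrightarrow> a \<in> carrier R \<Longrightarrow> b \<in> carrier R \<Longrightarrow> x \<in> carrier M \<Longrightarrow>
   (a \<oplus>\<^bsub>R\<^esub> b) \<odot>\<^bsub>M\<^esub> x = a \<odot>\<^bsub>M\<^esub> x \<oplus>\<^bsub>M\<^esub> b \<odot>\<^bsub>M\<^esub> x"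
  by (simp add: left_module_def)
lemma lm_d2: "left_module R M \<Longrightarrow> a \<in> carrier R \<Longrightarrow> x \<in> carrier M \<Longrightarrow> y \<in> carrier M \<Longrightarrow>
   a \<odot>\<^bsub>M\<^esub> (x \<oplus>\<^bsub>M\<^esub> y) = a \<odot>\<^bsub>M\<^esub> x \<oplus>\<^bsub>M\<^esub> a \<odot>\<^bsub>M\<^esub> y"
  by (simp add: left_module_def)
lemma lm_as: "left_module R M \<Longrightarrow> a \<in> carrier R \<Longrightarrow> b \<in> carrier R \<Longrightarrow> x \<in> carrier M \<Longrightarrow>
   (a \<otimes>\<^bsub>R\<^esub> b) \<odot>\<^bsub>M\<^esub> x = a \<odot>\<^bsub>M\<^esub> (b \<odot>\<^bsub>M\<^esub> x)"
  by (simp add: left_module_def)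
lemma lm_one: "left_module R M \<Longrightarrow> x \<in> carrier M \<Longrightarrow> \<one>\<^bsub>R\<^esub> \<odot>\<^bsub>M\<^esub> x = x"
  by (simp add: left_module_def)

lemma lm_zero: assumes "left_module R M" "a \<in> carrier R" shows "a \<odot>\<^bsub>M\<^esub> \<zero>\<^bsub>M\<^esub> = \<zero>\<^bsub>M\<^esub>"
proof -
  interpret abelian_group M using lm_ag[OF assms(1)] .
  have c: "a \<odot>\<^bsub>M\<^esub> \<zero>\<^bsub>M\<^esub> \<in> carrier M" using lm_cl[OF assms] by simp
  have "a \<odot>\<^bsub>M\<^esub> \<zero>\<^bsub>M\<^esub> = a \<odot>\<^bsub>M\<^esub> \<zero>\<^bsub>M\<^esub> \<oplus>\<^bsub>M\<^esub> a \<odot>\<^bsub>M\<^esub> \<zero>\<^bsub>M\<^esub>"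
    using lm_d2[OF assms(1,2), of "\<zero>\<^bsub>M\<^esub>" "\<zero>\<^bsub>M\<^esub>"] by simp
  then show ?thesis using c by (metis add.l_cancel_one' zero_closed)
qed

lemma submod_carrier: assumes lm: "left_module R M" shows "submod R M (carrier M)"
proof -
  interpret abelian_group M using lm_ag[OF lm] .
  show ?thesis unfolding submod_def using lm_cl[OF lm] by simp
qed

lemma submod_zero: assumes "left_module R M" shows "submod R M {\<zero>\<^bsub>M\<^esub>}"
proof -
  interpret abelian_group M using lm_ag[OF assms] .
  show ?thesis unfolding submod_def using lm_zero[OF assms] by simp
qed

lemma submod_addsub: assumes lm: "left_module R M" and sp: "submod R M P" shows "abelian_subgroup P M"
proof -
  have sp': "P \<subseteq> carrier M" "\<zero>\<^bsub>M\<^esub> \<in> P" "\<And>x y. x \<in> P \<Longrightarrow> y \<in> P \<Longrightarrow> x \<oplus>\<^bsub>M\<^esub> y \<in> P"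
     "\<And>x. x \<in> P \<Longrightarrow> \<ominus>\<^bsub>M\<^esub> x \<in> P" using sp unfolding submod_def by blast+
  have "subgroup P (add_monoid M)"
  proof (rule subgroup.intro)
    show "P \<subseteq> carrier (add_monoid M)" using sp'(1) by simp
    show "\<one>\<^bsub>add_monoid M\<^esub> \<in> P" using sp'(2) by simp
    fix x y assume "x \<in> P" "y \<in> P"
    then show "x \<otimes>\<^bsub>add_monoid M\<^esub> y \<in> P" using sp'(3) by simp
  next
    fix x assume "x \<in> P"
    then show "inv\<^bsub>add_monoid M\<^esub> x \<in> P" using sp'(4) unfolding a_inv_def by simp
  qed
  then show ?thesis by (rule abelian_subgroupI3[OF additive_subgroupI lm_ag[OF lm]])
qed

definition qmod :: "('r,'x) ring_scheme \<Rightarrow> ('r,'m) module \<Rightarrow> 'm set \<Rightarrow> ('r,'m set) module" where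
"qmod R M P = \<lparr>carrier = a_rcosets\<^bsub>M\<^esub> P, monoid.mult = (\<lambda>X Y. X), one = P, zero = P,
   add = set_add M, smult = (\<lambda>a X. \<Union>y\<in>X. P +>\<^bsub>M\<^esub> (a \<odot>\<^bsub>M\<^esub> y))\<rparr>"

lemma qmod_simps: "carrier (qmod R M P) = a_rcosets\<^bsub>M\<^esub> P" "zero (qmod R M P) = P"
  "add (qmod R M P) = set_add M" "smult (qmod R M P) = (\<lambda>a X. \<Union>y\<in>X. P +>\<^bsub>M\<^esub> (a \<odot>\<^bsub>M\<^esub> y))"
  by (simp_all add: qmod_def)

lemma qcarr: "X \<in> a_rcosets\<^bsub>M\<^esub> P \<longleftrightarrow> (\<exists>x\<in>carrier M. X = P +>\<^bsub>M\<^esub> x)"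
  unfolding A_RCOSETS_def' by blast

lemma ag_facts: assumes "abelian_group M" and x: "x \<in> carrier M" and y: "y \<in> carrier M"
  shows "x \<oplus>\<^bsub>M\<^esub> y \<in> carrier M" "\<ominus>\<^bsub>M\<^esub> x \<in> carrier M"
    "(y \<oplus>\<^bsub>M\<^esub> \<ominus>\<^bsub>M\<^esub> x) \<oplus>\<^bsub>M\<^esub> x = y"
    "(y \<oplus>\<^bsub>M\<^esub> x) \<oplus>\<^bsub>M\<^esub> \<ominus>\<^bsub>M\<^esub> x = y"
proof -
  interpret abelian_group M by fact
  show "x \<oplus>\<^bsub>M\<^esub> y \<in> carrier M" "\<ominus>\<^bsub>M\<^esub> x \<in> carrier M" using x y by auto
  show "(y \<oplus>\<^bsub>M\<^esub> \<ominus>\<^bsub>M\<^esub> x) \<oplus>\<^bsub>M\<^esub> x = y"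
  proof -
    have "(y \<oplus>\<^bsub>M\<^esub> \<ominus>\<^bsub>M\<^esub> x) \<oplus>\<^bsub>M\<^esub> x = y \<oplus>\<^bsub>M\<^esub> (\<ominus>\<^bsub>M\<^esub> x \<oplus>\<^bsub>M\<^esub> x)"
      using x y by (intro a_assoc a_inv_closed)
    also have "\<dots> = y" using x y by (simp add: l_neg)
    finally show ?thesis .
  qed
  show "(y \<oplus>\<^bsub>M\<^esub> x) \<oplus>\<^bsub>M\<^esub> \<ominus>\<^bsub>M\<^esub> x = y"
  proof -
    have "(y \<oplus>\<^bsub>M\<^esub> x) \<oplus>\<^bsub>M\<^esub> \<ominus>\<^bsub>M\<^esub> x = y \<oplus>\<^bsub>M\<^esub> (x \<oplus>\<^bsub>M\<^esub> \<ominus>\<^bsub>M\<^esub> x)"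
      using x y by (intro a_assoc a_inv_closed)
    also have "\<dots> = y" using x y by (simp add: r_neg)
    finally show ?thesis .
  qed
qed

lemma qsmult: assumes lm: "left_module R M" and sp: "submod R M P" and x: "x \<in> carrier M" and a: "a \<in> carrier R"
  shows "(\<Union>y\<in>P +>\<^bsub>M\<^esub> x. P +>\<^bsub>M\<^esub> (a \<odot>\<^bsub>M\<^esub> y)) = P +>\<^bsub>M\<^esub> (a \<odot>\<^bsub>M\<^esub> x)"
proof -
  have ag: "abelian_group M" using lm_ag[OF lm] .
  interpret abelian_subgroup P M using submod_addsub[OF lm sp] .
  have ax: "a \<odot>\<^bsub>M\<^esub> x \<in> carrier M" using lm_cl[OF lm a x] .
  have "P +>\<^bsub>M\<^esub> (a \<odot>\<^bsub>M\<^esub> y) = P +>\<^bsub>M\<^esub> (a \<odot>\<^bsub>M\<^esub> x)" if y: "y \<in> P +>\<^bsub>M\<^esub> x" for y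
  proof -
    have yc: "y \<in> carrier M" using a_elemrcos_carrier[OF x y] .
    define h where "h = y \<oplus>\<^bsub>M\<^esub> \<ominus>\<^bsub>M\<^esub> x"
    have hP: "h \<in> P" unfolding h_def using a_rcos_module_imp[OF x y] .
    have hc: "h \<in> carrier M" unfolding h_def using ag_facts(1)[OF ag yc ag_facts(2)[OF ag x x]] .
    have yh: "y = h \<oplus>\<^bsub>M\<^esub> x" unfolding h_def using ag_facts(3)[OF ag x yc] by (rule sym)
    have ay: "a \<odot>\<^bsub>M\<^esub> y = a \<odot>\<^bsub>M\<^esub> h \<oplus>\<^bsub>M\<^esub> a \<odot>\<^bsub>M\<^esub> x" 
      using lm_d2[OF lm a hc x] yh by simp
    have ahP: "a \<odot>\<^bsub>M\<^esub> h \<in> P" using sp a hP unfolding submod_def by blast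
    have ahc: "a \<odot>\<^bsub>M\<^esub> h \<in> carrier M" using lm_cl[OF lm a hc] .
    have ayc: "a \<odot>\<^bsub>M\<^esub> y \<in> carrier M" using lm_cl[OF lm a yc] .
    have "a \<odot>\<^bsub>M\<^esub> y \<oplus>\<^bsub>M\<^esub> \<ominus>\<^bsub>M\<^esub> (a \<odot>\<^bsub>M\<^esub> x) = a \<odot>\<^bsub>M\<^esub> h"
      unfolding ay by (rule ag_facts(4)[OF ag ax ahc])
    then have "a \<odot>\<^bsub>M\<^esub> y \<in> P +>\<^bsub>M\<^esub> (a \<odot>\<^bsub>M\<^esub> x)"
      using a_rcos_module_rev[OF ax ayc] ahP by simp
    then show ?thesis by (rule sym[OF a_repr_independence'[OF _ ax]])
  qed
  moreover have "x \<in> P +>\<^bsub>M\<^esub> x" using a_rcos_self[OF x] .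
  ultimately show ?thesis by blast
qed

lemma q_ag: assumes lm: "left_module R M" and sp: "submod R M P" shows "abelian_group (qmod R M P)"
proof -
  interpret abelian_subgroup P M using submod_addsub[OF lm sp] .
  show ?thesis
  proof (rule abelian_groupI, simp_all only: qmod_simps)
    fix X Y assume "X \<in> a_rcosets\<^bsub>M\<^esub> P" "Y \<in> a_rcosets\<^bsub>M\<^esub> P"
    then show "X <+>\<^bsub>M\<^esub> Y \<in> a_rcosets\<^bsub>M\<^esub> P" by (rule a_setmult_closed)
  next
    show "P \<in> a_rcosets\<^bsub>M\<^esub> P" by (rule a_subgroup_in_rcosets)
  next
    fix X Y Z assume "X \<in> a_rcosets\<^bsub>M\<^esub> P" "Y \<in> a_rcosets\<^bsub>M\<^esub> P" "Z \<in> a_rcosets\<^bsub>M\<^esub> P"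
    then show "X <+>\<^bsub>M\<^esub> Y <+>\<^bsub>M\<^esub> Z = X <+>\<^bsub>M\<^esub> (Y <+>\<^bsub>M\<^esub> Z)" by (rule a_rcosets_assoc)
  next
    fix X Y assume "X \<in> a_rcosets\<^bsub>M\<^esub> P" "Y \<in> a_rcosets\<^bsub>M\<^esub> P"
    then obtain x y where "x \<in> carrier M" "y \<in> carrier M" "X = P +>\<^bsub>M\<^esub> x" "Y = P +>\<^bsub>M\<^esub> y"
      by (meson qcarr)
    then show "X <+>\<^bsub>M\<^esub> Y = Y <+>\<^bsub>M\<^esub> X" by (simp add: a_rcos_sum a_comm)
  next
    fix X assume "X \<in> a_rcosets\<^bsub>M\<^esub> P"
    then show "P <+>\<^bsub>M\<^esub> X = X" by (rule rcosets_add_eq)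
  next
    fix X assume X: "X \<in> a_rcosets\<^bsub>M\<^esub> P"
    show "\<exists>Y\<in>a_rcosets\<^bsub>M\<^esub> P. Y <+>\<^bsub>M\<^esub> X = P"
      using a_setinv_closed[OF X] a_rcosets_inv_mult_group_eq[OF X] by blast
  qed
qed


lemma q_lm: assumes lm: "left_module R M" and sp: "submod R M P" shows "left_module R (qmod R M P)"
proof -
  interpret abelian_subgroup P M using submod_addsub[OF lm sp] .
  interpret R: ring R using lm_ring[OF lm] .
  have sm: "a \<odot>\<^bsub>qmod R M P\<^esub> (P +>\<^bsub>M\<^esub> x) = P +>\<^bsub>M\<^esub> (a \<odot>\<^bsub>M\<^esub> x)"
    if "a \<in> carrier R" "x \<in> carrier M" for a x
    using qsmult[OF lm sp that(2,1)] by (simp only: qmod_simps)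
  have ad: "(P +>\<^bsub>M\<^esub> x) \<oplus>\<^bsub>qmod R M P\<^esub> (P +>\<^bsub>M\<^esub> y) = P +>\<^bsub>M\<^esub> (x \<oplus>\<^bsub>M\<^esub> y)"
    if "x \<in> carrier M" "y \<in> carrier M" for x y
    using a_rcos_sum[OF that] by (simp only: qmod_simps)
  show ?thesis unfolding left_module_def
  proof (intro conjI ballI)
    show "ring R" by (rule R.ring_axioms)
    show "abelian_group (qmod R M P)" by (rule q_ag[OF lm sp])
  next
    fix a X assume a: "a \<in> carrier R" and X: "X \<in> carrier (qmod R M P)"
    obtain x where x: "x \<in> carrier M" "X = P +>\<^bsub>M\<^esub> x" using X unfolding qmod_simps qcarr by blast
    have "a \<odot>\<^bsub>qmod R M P\<^esub> X = P +>\<^bsub>M\<^esub> (a \<odot>\<^bsub>M\<^esub> x)" by (simp only: sm[OF a x(1)] x(2))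
    then show "a \<odot>\<^bsub>qmod R M P\<^esub> X \<in> carrier (qmod R M P)"
      unfolding qmod_simps qcarr using lm_cl[OF lm a x(1)] by blast
  next
    fix X assume X: "X \<in> carrier (qmod R M P)"
    obtain x where x: "x \<in> carrier M" "X = P +>\<^bsub>M\<^esub> x" using X unfolding qmod_simps qcarr by blast
    have "\<one>\<^bsub>R\<^esub> \<odot>\<^bsub>qmod R M P\<^esub> X = P +>\<^bsub>M\<^esub> (\<one>\<^bsub>R\<^esub> \<odot>\<^bsub>M\<^esub> x)" by (simp only: sm[OF R.one_closed x(1)] x(2))
    then show "\<one>\<^bsub>R\<^esub> \<odot>\<^bsub>qmod R M P\<^esub> X = X" by (metis lm_one[OF lm x(1)] x(2))
  next
    fix a b X assume a: "a \<in> carrier R" and b: "b \<in> carrier R" and X: "X \<in> carrier (qmod R M P)"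
    obtain x where x: "x \<in> carrier M" "X = P +>\<^bsub>M\<^esub> x" using X unfolding qmod_simps qcarr by blast
    have ax: "a \<odot>\<^bsub>M\<^esub> x \<in> carrier M" "b \<odot>\<^bsub>M\<^esub> x \<in> carrier M" using lm_cl[OF lm] a b x by auto
    have "(a \<oplus>\<^bsub>R\<^esub> b) \<odot>\<^bsub>qmod R M P\<^esub> X = P +>\<^bsub>M\<^esub> ((a \<oplus>\<^bsub>R\<^esub> b) \<odot>\<^bsub>M\<^esub> x)"
      by (simp only: sm[OF R.add.m_closed[OF a b] x(1)] x(2))
    also have "\<dots> = P +>\<^bsub>M\<^esub> (a \<odot>\<^bsub>M\<^esub> x \<oplus>\<^bsub>M\<^esub> b \<odot>\<^bsub>M\<^esub> x)" by (simp only: lm_d1[OF lm a b x(1)])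
    also have "\<dots> = a \<odot>\<^bsub>qmod R M P\<^esub> X \<oplus>\<^bsub>qmod R M P\<^esub> b \<odot>\<^bsub>qmod R M P\<^esub> X"
      by (simp only: ad[OF ax] sm[OF a x(1)] sm[OF b x(1)] x(2))
    finally show "(a \<oplus>\<^bsub>R\<^esub> b) \<odot>\<^bsub>qmod R M P\<^esub> X = a \<odot>\<^bsub>qmod R M P\<^esub> X \<oplus>\<^bsub>qmod R M P\<^esub> b \<odot>\<^bsub>qmod R M P\<^esub> X" .
    have "(a \<otimes>\<^bsub>R\<^esub> b) \<odot>\<^bsub>qmod R M P\<^esub> X = P +>\<^bsub>M\<^esub> ((a \<otimes>\<^bsub>R\<^esub> b) \<odot>\<^bsub>M\<^esub> x)"
      by (simp only: sm[OF R.m_closed[OF a b] x(1)] x(2))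
    also have "\<dots> = P +>\<^bsub>M\<^esub> (a \<odot>\<^bsub>M\<^esub> (b \<odot>\<^bsub>M\<^esub> x))" by (simp only: lm_as[OF lm a b x(1)])
    also have "\<dots> = a \<odot>\<^bsub>qmod R M P\<^esub> (b \<odot>\<^bsub>qmod R M P\<^esub> X)"
      by (simp only: sm[OF a ax(2)] sm[OF b x(1)] x(2))
    finally show "(a \<otimes>\<^bsub>R\<^esub> b) \<odot>\<^bsub>qmod R M P\<^esub> X = a \<odot>\<^bsub>qmod R M P\<^esub> (b \<odot>\<^bsub>qmod R M P\<^esub> X)" .
  next
    fix a X Y assume a: "a \<in> carrier R" and X: "X \<in> carrier (qmod R M P)" and Y: "Y \<in> carrier (qmod R M P)"
    obtain x where x: "x \<in> carrier M" "X = P +>\<^bsub>M\<^esub> x" using X unfolding qmod_simps qcarr by blast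
    obtain y where y: "y \<in> carrier M" "Y = P +>\<^bsub>M\<^esub> y" using Y unfolding qmod_simps qcarr by blast
    have xy: "x \<oplus>\<^bsub>M\<^esub> y \<in> carrier M"
      using abelian_monoid.a_closed[OF abelian_group.axioms(1)[OF lm_ag[OF lm]]] x(1) y(1) by blast
    have ax: "a \<odot>\<^bsub>M\<^esub> x \<in> carrier M" "a \<odot>\<^bsub>M\<^esub> y \<in> carrier M" using lm_cl[OF lm] a x y by auto
    have "a \<odot>\<^bsub>qmod R M P\<^esub> (X \<oplus>\<^bsub>qmod R M P\<^esub> Y) = a \<odot>\<^bsub>qmod R M P\<^esub> (P +>\<^bsub>M\<^esub> (x \<oplus>\<^bsub>M\<^esub> y))"
      by (simp only: ad[OF x(1) y(1)] x(2) y(2))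
    also have "\<dots> = P +>\<^bsub>M\<^esub> (a \<odot>\<^bsub>M\<^esub> (x \<oplus>\<^bsub>M\<^esub> y))" by (simp only: sm[OF a xy])
    also have "\<dots> = P +>\<^bsub>M\<^esub> (a \<odot>\<^bsub>M\<^esub> x \<oplus>\<^bsub>M\<^esub> a \<odot>\<^bsub>M\<^esub> y)" by (simp only: lm_d2[OF lm a x(1) y(1)])
    also have "\<dots> = a \<odot>\<^bsub>qmod R M P\<^esub> X \<oplus>\<^bsub>qmod R M P\<^esub> a \<odot>\<^bsub>qmod R M P\<^esub> Y"
      by (simp only: ad[OF ax] sm[OF a x(1)] sm[OF a y(1)] x(2) y(2))
    finally show "a \<odot>\<^bsub>qmod R M P\<^esub> (X \<oplus>\<^bsub>qmod R M P\<^esub> Y) = a \<odot>\<^bsub>qmod R M P\<^esub> X \<oplus>\<^bsub>qmod R M P\<^esub> a \<odot>\<^bsub>qmod R M P\<^esub> Y" .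
  qed
qed


lemma ag_minus_zero: "abelian_group G \<Longrightarrow> \<ominus>\<^bsub>G\<^esub> \<zero>\<^bsub>G\<^esub> = \<zero>\<^bsub>G\<^esub>"
proof -
  assume "abelian_group G"
  then interpret abelian_group G .
  show ?thesis by simp
qed

lemma ag_idem: assumes "abelian_group G" "x \<in> carrier G" "x \<oplus>\<^bsub>G\<^esub> x = x" shows "x = \<zero>\<^bsub>G\<^esub>"
proof -
  interpret abelian_group G by fact
  show ?thesis using assms(2,3) by (metis add.l_cancel_one' zero_closed)
qed

lemma q_sm: assumes lm: "left_module R M" and sp: "submod R M P" and a: "a \<in> carrier R" and x: "x \<in> carrier M"
  shows "a \<odot>\<^bsub>qmod R M P\<^esub> (P +>\<^bsub>M\<^esub> x) = P +>\<^bsub>M\<^esub> (a \<odot>\<^bsub>M\<^esub> x)"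
  using qsmult[OF lm sp x a] by (simp only: qmod_simps)

lemma q_cp: assumes lm: "left_module R M" and cp: "completely_prime_submod R M P"
  shows "completely_prime_module R (qmod R M P)"
proof -
  have sp: "submod R M P" using cp unfolding completely_prime_submod_def by blast
  interpret abelian_subgroup P M using submod_addsub[OF lm sp] .
  have agq: "abelian_group (qmod R M P)" using q_ag[OF lm sp] .
  have z0: "\<zero>\<^bsub>M\<^esub> \<in> P" using sp unfolding submod_def by blast
  have Pc: "P = P +>\<^bsub>M\<^esub> \<zero>\<^bsub>M\<^esub>" using a_rcos_const[OF z0] by simp
  have Pq: "P \<in> carrier (qmod R M P)" unfolding qmod_simps by (rule a_subgroup_in_rcosets)
  have rep: "\<exists>x\<in>carrier M. X = P +>\<^bsub>M\<^esub> x" if "X \<in> carrier (qmod R M P)" for X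
    using that unfolding qmod_simps qcarr .
  have eqP: "P +>\<^bsub>M\<^esub> y = P \<longleftrightarrow> y \<in> P" if "y \<in> carrier M" for y
  proof
    assume "P +>\<^bsub>M\<^esub> y = P" then show "y \<in> P" using a_rcos_self[OF that] by simp
  next
    assume "y \<in> P" then show "P +>\<^bsub>M\<^esub> y = P" by (rule a_rcos_const)
  qed
  have sub: "submod R (qmod R M P) {P}"
    unfolding submod_def
  proof (intro conjI ballI)
    show "{P} \<subseteq> carrier (qmod R M P)" using Pq by simp
    show "\<zero>\<^bsub>qmod R M P\<^esub> \<in> {P}" by (simp add: qmod_simps)
  next
    fix x y assume "x \<in> {P}" "y \<in> {P}"
    then show "x \<oplus>\<^bsub>qmod R M P\<^esub> y \<in> {P}"
      using rcosets_add_eq[OF a_subgroup_in_rcosets] by (simp add: qmod_simps)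
  next
    fix x assume "x \<in> {P}"
    then show "\<ominus>\<^bsub>qmod R M P\<^esub> x \<in> {P}" using ag_minus_zero[OF agq] by (simp add: qmod_simps)
  next
    fix a x assume a: "a \<in> carrier R" and "x \<in> {P}"
    then have "x = P +>\<^bsub>M\<^esub> \<zero>\<^bsub>M\<^esub>" using Pc by simp
    then have "a \<odot>\<^bsub>qmod R M P\<^esub> x = P +>\<^bsub>M\<^esub> (a \<odot>\<^bsub>M\<^esub> \<zero>\<^bsub>M\<^esub>)" using q_sm[OF lm sp a] by simp
    then show "a \<odot>\<^bsub>qmod R M P\<^esub> x \<in> {P}" using lm_zero[OF lm a] Pc by simp
  qed
  have nRM: "\<not> RM R (qmod R M P) \<subseteq> {P}"
  proof
    assume H: "RM R (qmod R M P) \<subseteq> {P}"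
    obtain r m where rm: "r \<in> carrier R" "m \<in> carrier M" "r \<odot>\<^bsub>M\<^esub> m \<notin> P"
      using cp unfolding completely_prime_submod_def RM_def by blast
    have mq: "P +>\<^bsub>M\<^esub> m \<in> carrier (qmod R M P)" using rm(2) unfolding qmod_simps qcarr by blast
    have "r \<odot>\<^bsub>qmod R M P\<^esub> (P +>\<^bsub>M\<^esub> m) \<in> RM R (qmod R M P)" unfolding RM_def using rm(1) mq by blast
    then have "P +>\<^bsub>M\<^esub> (r \<odot>\<^bsub>M\<^esub> m) = P" using H q_sm[OF lm sp rm(1,2)] by auto
    then show False using eqP[OF lm_cl[OF lm rm(1,2)]] rm(3) by simp
  qed
  have pr: "\<forall>r\<in>carrier R. \<forall>X\<in>carrier (qmod R M P). r \<odot>\<^bsub>qmod R M P\<^esub> X \<in> {P} \<longrightarrow>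
      X \<in> {P} \<or> (\<forall>X'\<in>carrier (qmod R M P). r \<odot>\<^bsub>qmod R M P\<^esub> X' \<in> {P})"
  proof (intro ballI impI)
    fix r X assume r: "r \<in> carrier R" and X: "X \<in> carrier (qmod R M P)" and H: "r \<odot>\<^bsub>qmod R M P\<^esub> X \<in> {P}"
    obtain m where m: "m \<in> carrier M" "X = P +>\<^bsub>M\<^esub> m" using rep[OF X] by blast
    have "P +>\<^bsub>M\<^esub> (r \<odot>\<^bsub>M\<^esub> m) = P" using H q_sm[OF lm sp r m(1)] m(2) by simp
    then have "r \<odot>\<^bsub>M\<^esub> m \<in> P" using eqP[OF lm_cl[OF lm r m(1)]] by simp
    then have "m \<in> P \<or> (\<forall>m' \<in> carrier M. r \<odot>\<^bsub>M\<^esub> m' \<in> P)"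
      using cp r m(1) unfolding completely_prime_submod_def by blast
    then show "X \<in> {P} \<or> (\<forall>X'\<in>carrier (qmod R M P). r \<odot>\<^bsub>qmod R M P\<^esub> X' \<in> {P})"
    proof
      assume "m \<in> P" then show ?thesis using m(2) eqP[OF m(1)] by simp
    next
      assume A: "\<forall>m' \<in> carrier M. r \<odot>\<^bsub>M\<^esub> m' \<in> P"
      have "r \<odot>\<^bsub>qmod R M P\<^esub> X' \<in> {P}" if X': "X' \<in> carrier (qmod R M P)" for X'
      proof -
        obtain m' where m': "m' \<in> carrier M" "X' = P +>\<^bsub>M\<^esub> m'" using rep[OF X'] by blast
        have "r \<odot>\<^bsub>qmod R M P\<^esub> X' = P +>\<^bsub>M\<^esub> (r \<odot>\<^bsub>M\<^esub> m')" using q_sm[OF lm sp r m'(1)] m'(2) by simp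
        also have "\<dots> = P" using eqP[OF lm_cl[OF lm r m'(1)]] A m'(1) by blast
        finally show ?thesis by simp
      qed
      then show ?thesis by blast
    qed
  qed
  show ?thesis unfolding completely_prime_module_def completely_prime_submod_def qmod_simps(2)
    using sub nRM pr unfolding qmod_simps(2) by blast
qed


lemma gen_sub: "submod R M N \<Longrightarrow> S \<subseteq> N \<Longrightarrow> gen_submod R M S \<subseteq> N"
  unfolding gen_submod_def by blast
lemma gen_super: "S \<subseteq> gen_submod R M S"
  unfolding gen_submod_def by blast
lemma gen_zero: "\<zero>\<^bsub>M\<^esub> \<in> gen_submod R M S"
  unfolding gen_submod_def submod_def by blast

lemma rm_nz: assumes lm: "left_module R M" and nz: "carrier M \<noteq> {\<zero>\<^bsub>M\<^esub>}"
  shows "\<not> RM R M \<subseteq> {\<zero>\<^bsub>M\<^esub>}"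
proof -
  interpret abelian_group M using lm_ag[OF lm] .
  interpret R: ring R using lm_ring[OF lm] .
  obtain m where m: "m \<in> carrier M" "m \<noteq> \<zero>\<^bsub>M\<^esub>" using nz zero_closed by blast
  have "\<one>\<^bsub>R\<^esub> \<odot>\<^bsub>M\<^esub> m \<in> RM R M" unfolding RM_def using m(1) by blast
  then show ?thesis using lm_one[OF lm m(1)] m(2) by auto
qed

lemma semiI: assumes lm: "left_module R M" and nz: "carrier M \<noteq> {\<zero>\<^bsub>M\<^esub>}"
  and h: "\<And>a m. a \<in> carrier R \<Longrightarrow> m \<in> carrier M \<Longrightarrow> (a \<otimes>\<^bsub>R\<^esub> a) \<odot>\<^bsub>M\<^esub> m = \<zero>\<^bsub>M\<^esub> \<Longrightarrow> a \<odot>\<^bsub>M\<^esub> m = \<zero>\<^bsub>M\<^esub>"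
  shows "completely_semiprime_module R M"
  unfolding completely_semiprime_module_def completely_semiprime_submod_def
proof (intro conjI ballI impI)
  show "submod R M {\<zero>\<^bsub>M\<^esub>}" by (rule submod_zero[OF lm])
  show "{\<zero>\<^bsub>M\<^esub>} \<noteq> carrier M" using nz by (rule not_sym)
  show "\<not> RM R M \<subseteq> {\<zero>\<^bsub>M\<^esub>}" by (rule rm_nz[OF lm nz])
  fix a m assume "a \<in> carrier R" "m \<in> carrier M" "(a \<otimes>\<^bsub>R\<^esub> a) \<odot>\<^bsub>M\<^esub> m \<in> {\<zero>\<^bsub>M\<^esub>}"
  then show "a \<odot>\<^bsub>M\<^esub> m \<in> {\<zero>\<^bsub>M\<^esub>}" using h by simp
qed

lemma semi_pow: assumes lm: "left_module R M" and sp: "completely_semiprime_module R M"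
  and r: "r \<in> carrier R" and m: "m \<in> carrier M"
  shows "(r [^]\<^bsub>R\<^esub> (Suc k)) \<odot>\<^bsub>M\<^esub> m = \<zero>\<^bsub>M\<^esub> \<Longrightarrow> r \<odot>\<^bsub>M\<^esub> m = \<zero>\<^bsub>M\<^esub>"
proof (induction k)
  interpret R: ring R using lm_ring[OF lm] .
  case 0
  then show ?case using r by simp
next
  interpret R: ring R using lm_ring[OF lm] .
  case (Suc k)
  have cond: "\<And>a m. a \<in> carrier R \<Longrightarrow> m \<in> carrier M \<Longrightarrow> (a \<otimes>\<^bsub>R\<^esub> a) \<odot>\<^bsub>M\<^esub> m = \<zero>\<^bsub>M\<^esub> \<Longrightarrow> a \<odot>\<^bsub>M\<^esub> m = \<zero>\<^bsub>M\<^esub>"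
    using sp unfolding completely_semiprime_module_def completely_semiprime_submod_def by blast
  have rk: "r [^]\<^bsub>R\<^esub> k \<in> carrier R" using r by simp
  have rkm: "(r [^]\<^bsub>R\<^esub> k) \<odot>\<^bsub>M\<^esub> m \<in> carrier M" using lm_cl[OF lm rk m] .
  have "r [^]\<^bsub>R\<^esub> (Suc (Suc k)) = (r \<otimes>\<^bsub>R\<^esub> r) \<otimes>\<^bsub>R\<^esub> r [^]\<^bsub>R\<^esub> k"
  proof -
    have "r [^]\<^bsub>R\<^esub> (Suc (Suc k)) = r \<otimes>\<^bsub>R\<^esub> (r \<otimes>\<^bsub>R\<^esub> r [^]\<^bsub>R\<^esub> k)"
      by (simp only: R.nat_pow_Suc2[OF r])
    also have "\<dots> = (r \<otimes>\<^bsub>R\<^esub> r) \<otimes>\<^bsub>R\<^esub> r [^]\<^bsub>R\<^esub> k"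
      using R.m_assoc[OF r r rk] by (rule sym)
    finally show ?thesis .
  qed
  then have "(r \<otimes>\<^bsub>R\<^esub> r) \<odot>\<^bsub>M\<^esub> ((r [^]\<^bsub>R\<^esub> k) \<odot>\<^bsub>M\<^esub> m) = \<zero>\<^bsub>M\<^esub>"
    using Suc.prems lm_as[OF lm R.m_closed[OF r r] rk m] by simp
  then have "r \<odot>\<^bsub>M\<^esub> ((r [^]\<^bsub>R\<^esub> k) \<odot>\<^bsub>M\<^esub> m) = \<zero>\<^bsub>M\<^esub>" using cond[OF r rkm] by blast
  then have "(r [^]\<^bsub>R\<^esub> (Suc k)) \<odot>\<^bsub>M\<^esub> m = \<zero>\<^bsub>M\<^esub>"
    using lm_as[OF lm r rk m] R.nat_pow_Suc2[OF r, of k] by simp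
  then show ?case by (rule Suc.IH)
qed

lemma semi_to_gen: assumes lm: "left_module R M" and sp: "completely_semiprime_module R M"
  shows "gen_submod R M (envelope R M {\<zero>\<^bsub>M\<^esub>}) = {\<zero>\<^bsub>M\<^esub>}"
proof -
  have "envelope R M {\<zero>\<^bsub>M\<^esub>} \<subseteq> {\<zero>\<^bsub>M\<^esub>}"
  proof
    fix z assume "z \<in> envelope R M {\<zero>\<^bsub>M\<^esub>}"
    then obtain r m k where z: "z = r \<odot>\<^bsub>M\<^esub> m" "r \<in> carrier R" "m \<in> carrier M" "(k::nat) \<ge> 1"
       "(r [^]\<^bsub>R\<^esub> k) \<odot>\<^bsub>M\<^esub> m = \<zero>\<^bsub>M\<^esub>" unfolding envelope_def by blast
    obtain j where "k = Suc j" using z(4) by (cases k) auto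
    then show "z \<in> {\<zero>\<^bsub>M\<^esub>}" using semi_pow[OF lm sp z(2,3)] z by simp
  qed
  then have "gen_submod R M (envelope R M {\<zero>\<^bsub>M\<^esub>}) \<subseteq> {\<zero>\<^bsub>M\<^esub>}"
    by (rule gen_sub[OF submod_zero[OF lm]])
  then show ?thesis using gen_zero by blast
qed

lemma gen_to_semi: assumes lm: "left_module R M" and nz: "carrier M \<noteq> {\<zero>\<^bsub>M\<^esub>}"
  and g: "gen_submod R M (envelope R M {\<zero>\<^bsub>M\<^esub>}) = {\<zero>\<^bsub>M\<^esub>}"
  shows "completely_semiprime_module R M"
proof -
  interpret R: ring R using lm_ring[OF lm] .
  have "a \<odot>\<^bsub>M\<^esub> m = \<zero>\<^bsub>M\<^esub>" if a: "a \<in> carrier R" and m: "m \<in> carrier M"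
     and h: "(a \<otimes>\<^bsub>R\<^esub> a) \<odot>\<^bsub>M\<^esub> m = \<zero>\<^bsub>M\<^esub>" for a m
  proof -
    have "a [^]\<^bsub>R\<^esub> (2::nat) = a \<otimes>\<^bsub>R\<^esub> a" using a by (simp add: numeral_2_eq_2)
    then have "a \<odot>\<^bsub>M\<^esub> m \<in> envelope R M {\<zero>\<^bsub>M\<^esub>}" unfolding envelope_def using a m h
      by (intro CollectI exI[of _ a] exI[of _ m]) (auto intro!: exI[of _ "2::nat"])
    then show ?thesis using gen_super[of "envelope R M {\<zero>\<^bsub>M\<^esub>}" R M] g by blast
  qed
  then show ?thesis by (rule semiI[OF lm nz])
qed


lemma prod_module_simps: "carrier (prod_module I S) = PiE I (\<lambda>i. carrier (S i))"
  "add (prod_module I S) = (\<lambda>f g. \<lambda>i\<in>I. f i \<oplus>\<^bsub>S i\<^esub> g i)"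
  "smult (prod_module I S) = (\<lambda>a f. \<lambda>i\<in>I. a \<odot>\<^bsub>S i\<^esub> f i)"
  by (simp_all add: prod_module_def)

lemma sdp_semiprime:
  fixes I :: "'i set" and S :: "'i \<Rightarrow> ('r, 's) module"
  assumes lm: "left_module R M" and nz: "carrier M \<noteq> {\<zero>\<^bsub>M\<^esub>}"
    and sdp: "subdirect_product_of_completely_prime R M I S"
  shows "completely_semiprime_module R M"
proof -
  interpret R: ring R using lm_ring[OF lm] .
  interpret abelian_group M using lm_ag[OF lm] .
  obtain \<sigma> where hom: "\<sigma> \<in> module_hom R M (prod_module I S)" and inj: "inj_on \<sigma> (carrier M)"
    and SI: "\<And>i. i \<in> I \<Longrightarrow> left_module R (S i) \<and> completely_prime_module R (S i)"
    using sdp unfolding subdirect_product_of_completely_prime_def by blast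
  have hc: "\<sigma> x \<in> PiE I (\<lambda>i. carrier (S i))" if "x \<in> carrier M" for x
    using hom that unfolding module_hom_def prod_module_simps by blast
  have hadd: "\<sigma> (x \<oplus>\<^bsub>M\<^esub> y) = (\<lambda>i\<in>I. \<sigma> x i \<oplus>\<^bsub>S i\<^esub> \<sigma> y i)" if "x \<in> carrier M" "y \<in> carrier M" for x y
    using hom that unfolding module_hom_def prod_module_simps by blast
  have hsm: "\<sigma> (a \<odot>\<^bsub>M\<^esub> x) = (\<lambda>i\<in>I. a \<odot>\<^bsub>S i\<^esub> \<sigma> x i)" if "a \<in> carrier R" "x \<in> carrier M" for a x
    using hom that unfolding module_hom_def prod_module_simps by blast
  have z: "\<sigma> \<zero>\<^bsub>M\<^esub> i = \<zero>\<^bsub>S i\<^esub>" if i: "i \<in> I" for i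
  proof -
    have "\<sigma> \<zero>\<^bsub>M\<^esub> i = \<sigma> (\<zero>\<^bsub>M\<^esub> \<oplus>\<^bsub>M\<^esub> \<zero>\<^bsub>M\<^esub>) i" by simp
    also have "\<dots> = \<sigma> \<zero>\<^bsub>M\<^esub> i \<oplus>\<^bsub>S i\<^esub> \<sigma> \<zero>\<^bsub>M\<^esub> i" using i by (subst hadd[OF zero_closed zero_closed]) simp
    finally have e: "\<sigma> \<zero>\<^bsub>M\<^esub> i \<oplus>\<^bsub>S i\<^esub> \<sigma> \<zero>\<^bsub>M\<^esub> i = \<sigma> \<zero>\<^bsub>M\<^esub> i" by (rule sym)
    have "\<sigma> \<zero>\<^bsub>M\<^esub> i \<in> carrier (S i)" using hc[OF zero_closed] i by blast
    then show ?thesis using ag_idem[OF lm_ag[OF conjunct1[OF SI[OF i]]] _ e] by blast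
  qed
  have main: "a \<odot>\<^bsub>M\<^esub> m = \<zero>\<^bsub>M\<^esub>" if a: "a \<in> carrier R" and m: "m \<in> carrier M"
     and h: "(a \<otimes>\<^bsub>R\<^esub> a) \<odot>\<^bsub>M\<^esub> m = \<zero>\<^bsub>M\<^esub>" for a m
  proof -
    have am: "a \<odot>\<^bsub>M\<^esub> m \<in> carrier M" using lm_cl[OF lm a m] .
    have comp: "\<sigma> (a \<odot>\<^bsub>M\<^esub> m) i = \<sigma> \<zero>\<^bsub>M\<^esub> i" if i: "i \<in> I" for i
    proof -
      have lmi: "left_module R (S i)" and cpi: "completely_prime_module R (S i)" using SI[OF i] by auto
      define u where "u = \<sigma> m i"
      have u: "u \<in> carrier (S i)" using hc[OF m] i unfolding u_def by blast
      have au: "a \<odot>\<^bsub>S i\<^esub> u \<in> carrier (S i)" using lm_cl[OF lmi a u] .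
      have "a \<odot>\<^bsub>S i\<^esub> (a \<odot>\<^bsub>S i\<^esub> u) = (a \<otimes>\<^bsub>R\<^esub> a) \<odot>\<^bsub>S i\<^esub> u" using lm_as[OF lmi a a u] by simp
      also have "\<dots> = \<sigma> ((a \<otimes>\<^bsub>R\<^esub> a) \<odot>\<^bsub>M\<^esub> m) i" using hsm[OF R.m_closed[OF a a] m] i unfolding u_def by simp
      also have "\<dots> = \<zero>\<^bsub>S i\<^esub>" using h z[OF i] by simp
      finally have e: "a \<odot>\<^bsub>S i\<^esub> (a \<odot>\<^bsub>S i\<^esub> u) = \<zero>\<^bsub>S i\<^esub>" .
      have "a \<odot>\<^bsub>S i\<^esub> u \<in> {\<zero>\<^bsub>S i\<^esub>} \<or> (\<forall>x\<in>carrier (S i). a \<odot>\<^bsub>S i\<^esub> x \<in> {\<zero>\<^bsub>S i\<^esub>})"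
        using cpi a au e unfolding completely_prime_module_def completely_prime_submod_def by blast
      then have "a \<odot>\<^bsub>S i\<^esub> u = \<zero>\<^bsub>S i\<^esub>" using u by blast
      then show ?thesis using hsm[OF a m] i z[OF i] unfolding u_def by simp
    qed
    have "\<sigma> (a \<odot>\<^bsub>M\<^esub> m) = \<sigma> \<zero>\<^bsub>M\<^esub>" by (rule PiE_ext[OF hc[OF am] hc[OF zero_closed] comp])
    then show ?thesis using inj am zero_closed unfolding inj_on_def by blast
  qed
  show ?thesis by (rule semiI[OF lm nz main])
qed


lemma beta_zero: assumes lm: "left_module R M" and crf: "complete_radical_formula R M"
  shows "beta_co R M = gen_submod R M (envelope R M {\<zero>\<^bsub>M\<^esub>})"
  using crf submod_zero[OF lm] unfolding complete_radical_formula_def complete_radical_formula_submod_def beta_co_def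
  by metis

lemma semi_to_sdp:
  fixes R :: "('r, 'x) ring_scheme" and M :: "('r, 'm) module"
  assumes lm: "left_module R M" and nz: "carrier M \<noteq> {\<zero>\<^bsub>M\<^esub>}"
    and crf: "complete_radical_formula R M" and sp: "completely_semiprime_module R M"
  shows "\<exists>(I :: 'm set set) (S :: 'm set \<Rightarrow> ('r, 'm set) module). subdirect_product_of_completely_prime R M I S"
proof -
  interpret abelian_group M using lm_ag[OF lm] .
  define I where "I = {P. completely_prime_submod R M P \<and> {\<zero>\<^bsub>M\<^esub>} \<subseteq> P}"
  have b: "beta_s_co R M {\<zero>\<^bsub>M\<^esub>} = {\<zero>\<^bsub>M\<^esub>}"
    using beta_zero[OF lm crf] semi_to_gen[OF lm sp] unfolding beta_co_def by simp
  have ex: "\<exists>P. completely_prime_submod R M P \<and> {\<zero>\<^bsub>M\<^esub>} \<subseteq> P"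
  proof (rule ccontr)
    assume na: "\<not> ?thesis"
    have "beta_s_co R M {\<zero>\<^bsub>M\<^esub>} = carrier M" unfolding beta_s_co_def by (rule if_not_P[OF na])
    then show False using b nz by simp
  qed
  have "beta_s_co R M {\<zero>\<^bsub>M\<^esub>} = \<Inter> I" unfolding beta_s_co_def I_def by (rule if_P[OF ex])
  then have inter: "\<Inter> I = {\<zero>\<^bsub>M\<^esub>}" using b by simp
  have cpI: "completely_prime_submod R M P" if "P \<in> I" for P using that unfolding I_def by blast
  have spI: "submod R M P" if "P \<in> I" for P using cpI[OF that] unfolding completely_prime_submod_def by blast
  define \<sigma> where "\<sigma> = (\<lambda>m. \<lambda>P\<in>I. P +>\<^bsub>M\<^esub> m)"
  have sig: "\<sigma> m P = P +>\<^bsub>M\<^esub> m" if "P \<in> I" for m P using that unfolding \<sigma>_def by simp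
  have hom: "\<sigma> \<in> module_hom R M (prod_module I (qmod R M))"
    unfolding module_hom_def prod_module_simps
  proof (intro CollectI conjI ballI funcsetI)
    fix x assume x: "x \<in> carrier M"
    show "\<sigma> x \<in> PiE I (\<lambda>i. carrier (qmod R M i))" unfolding \<sigma>_def restrict_PiE_iff qmod_simps qcarr
      using x by blast
  next
    fix x y assume x: "x \<in> carrier M" and y: "y \<in> carrier M"
    show "\<sigma> (x \<oplus>\<^bsub>M\<^esub> y) = (\<lambda>i\<in>I. \<sigma> x i \<oplus>\<^bsub>qmod R M i\<^esub> \<sigma> y i)"
      unfolding \<sigma>_def
    proof (rule restrict_ext)
      fix P assume P: "P \<in> I"
      interpret abelian_subgroup P M using submod_addsub[OF lm spI[OF P]] .
      show "P +>\<^bsub>M\<^esub> (x \<oplus>\<^bsub>M\<^esub> y) = (\<lambda>P\<in>I. P +>\<^bsub>M\<^esub> x) P \<oplus>\<^bsub>qmod R M P\<^esub> (\<lambda>P\<in>I. P +>\<^bsub>M\<^esub> y) P"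
        using P a_rcos_sum[OF x y] by (simp add: qmod_simps)
    qed
  next
    fix a x assume a: "a \<in> carrier R" and x: "x \<in> carrier M"
    show "\<sigma> (a \<odot>\<^bsub>M\<^esub> x) = (\<lambda>i\<in>I. a \<odot>\<^bsub>qmod R M i\<^esub> \<sigma> x i)"
      unfolding \<sigma>_def
    proof (rule restrict_ext)
      fix P assume P: "P \<in> I"
      show "P +>\<^bsub>M\<^esub> (a \<odot>\<^bsub>M\<^esub> x) = a \<odot>\<^bsub>qmod R M P\<^esub> (\<lambda>P\<in>I. P +>\<^bsub>M\<^esub> x) P"
        using P q_sm[OF lm spI[OF P] a x] by simp
    qed
  qed
  have inj: "inj_on \<sigma> (carrier M)"
  proof (rule inj_onI)
    fix x y assume x: "x \<in> carrier M" and y: "y \<in> carrier M" and e: "\<sigma> x = \<sigma> y"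
    have "x \<oplus>\<^bsub>M\<^esub> \<ominus>\<^bsub>M\<^esub> y \<in> P" if P: "P \<in> I" for P
    proof -
      interpret abelian_subgroup P M using submod_addsub[OF lm spI[OF P]] .
      have "P +>\<^bsub>M\<^esub> x = P +>\<^bsub>M\<^esub> y" using e sig[OF P] by metis
      then have "x \<in> P +>\<^bsub>M\<^esub> y" using a_rcos_self[OF x] by simp
      then show ?thesis by (rule a_rcos_module_imp[OF y])
    qed
    then have "x \<oplus>\<^bsub>M\<^esub> \<ominus>\<^bsub>M\<^esub> y = \<zero>\<^bsub>M\<^esub>" using inter by blast
    then have "(x \<oplus>\<^bsub>M\<^esub> \<ominus>\<^bsub>M\<^esub> y) \<oplus>\<^bsub>M\<^esub> y = y" using y by simp
    then show "x = y" using ag_facts(3)[OF lm_ag[OF lm] y x] by simp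
  qed
  have surj: "(\<lambda>m. \<sigma> m P) ` carrier M = carrier (qmod R M P)" if P: "P \<in> I" for P
    unfolding sig[OF P] qmod_simps A_RCOSETS_def' by blast
  have "subdirect_product_of_completely_prime R M I (qmod R M)"
    unfolding subdirect_product_of_completely_prime_def
    using q_lm[OF lm spI] q_cp[OF lm cpI] hom inj surj by blast
  then show ?thesis by blast
qed

theorem theorem5p2:
  fixes R :: "'r ring" and M :: "('r, 'm) module"
  assumes "left_module R M"
    and "carrier M \<noteq> {\<zero>\<^bsub>M\<^esub>}"
    and "complete_radical_formula R M"
  shows "(completely_semiprime_module R M \<longleftrightarrow>
            gen_submod R M (envelope R M {\<zero>\<^bsub>M\<^esub>}) = {\<zero>\<^bsub>M\<^esub>})
       \<and> (gen_submod R M (envelope R M {\<zero>\<^bsub>M\<^esub>}) = {\<zero>\<^bsub>M\<^esub>} \<longleftrightarrow>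
            beta_co R M = {\<zero>\<^bsub>M\<^esub>})
       \<and> (completely_semiprime_module R M \<longleftrightarrow>
            (\<exists>(I :: 'm set set) (S :: 'm set \<Rightarrow> ('r, 'm set) module).
               subdirect_product_of_completely_prime R M I S))
       \<and> (\<forall>(I :: 'i set) (S :: 'i \<Rightarrow> ('r, 's) module).
            subdirect_product_of_completely_prime R M I S \<longrightarrow> completely_semiprime_module R M)"
proof (intro conjI allI impI)
  note lm = assms(1) and nz = assms(2) and crf = assms(3)
  show "completely_semiprime_module R M \<longleftrightarrow> gen_submod R M (envelope R M {\<zero>\<^bsub>M\<^esub>}) = {\<zero>\<^bsub>M\<^esub>}"
    using semi_to_gen[OF lm] gen_to_semi[OF lm nz] by blast
  show "gen_submod R M (envelope R M {\<zero>\<^bsub>M\<^esub>}) = {\<zero>\<^bsub>M\<^esub>} \<longleftrightarrow> beta_co R M = {\<zero>\<^bsub>M\<^esub>}"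
    using beta_zero[OF lm crf] by simp
  show "completely_semiprime_module R M \<longleftrightarrow>
            (\<exists>(I :: 'm set set) (S :: 'm set \<Rightarrow> ('r, 'm set) module).
               subdirect_product_of_completely_prime R M I S)"
    using semi_to_sdp[OF lm nz crf] sdp_semiprime[OF lm nz] by blast
  fix I :: "'i set" and S :: "'i \<Rightarrow> ('r, 's) module"
  assume "subdirect_product_of_completely_prime R M I S"
  then show "completely_semiprime_module R M" by (rule sdp_semiprime[OF lm nz])
qed

end
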